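(* Let $Q = R_0(u_0) \leftarrow A_1 \wedge \cdots \wedge A_m$ be a conjunctive query with $var(Q)=\{X_1,\ldots,X_k\}$, equipped with an arbitrary set of functional dependencies on its relations, and assume $Q=chase(Q)$. Let $s(Q)$ be the optimal value of the following linear program in the $2^k$ real variables $h(S)$, $S\subseteq[k]$ (with $h(\emptyset)=0$): \begin{align*} \text{maximize } \quad & h(u_0)\\ \text{subject to } \quad & h(u_i)\le 1 \quad \text{for all } i=1,\ldots,m,\\ & h(\{t\}\mid\{i_1,\ldots,i_j\})=0 \quad \text{for each induced dependency } X_{i_1},\ldots,X_{i_j}\to X_t \text{ in } F(Q),\\ & h(\{i\}\mid [k]\setminus\{i\})\ge 0 \quad \text{for all } i\in[k],\\ & I(i;j\mid S)\ge 0 \quad \text{for all } i\neq j\in[k] \text{ and } S\subseteq[k]\setminus\{i,j\}. \end{align*} Then for every database $D$ (with nonempty relations) satisfying the functional dependencies, $|Q(D)|\le \mathrm{rmax}(Q,D)^{s(Q)}$.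
   Context: A conjunctive query has the form $Q = R_0(u_0)\leftarrow A_1\wedge\cdots\wedge A_m$, where each body atom is $A_i=R_{j(i)}(u_i)$ for a relation name $R_{j(i)}$ among $R_1,\ldots,R_n$ (a relation name may occur in several atoms, so $m\ge n$), each $u_i$ is a list of (not necessarily distinct) variables of length equal to the arity of $R_{j(i)}$, and every variable of the head list $u_0$ occurs in some $u_i$, $i\ge1$. $var(Q)$ is the set of all variables of $Q$. A database $D$ consists of a finite universe $U$ and a finite relation $R_j^D$ over $U$ for each relation name. The answer $Q(D)$ is the set of tuples $\theta(u_0)$ over all maps $\theta: var(Q)\to U$ such that $\theta(u_i)\in R_{j(i)}^D$ for every $i\ge1$. $\mathrm{rmax}(Q,D)$ denotes the number of tuples in the largest of the relations $R_1^D,\ldots,R_n^D$. A functional dependency (FD) $V\to a$ on a relation $R$, where $V$ is a set of attribute positions of $R$ and $a$ a position, is satisfied by $D$ if any two tuples of $R^D$ agreeing on all positions in $V$ also agree on position $a$. Each FD $V\to a$ on $R$ and each body atom $R(u)$ induce the dependency among query variables $\{u[p]:p\in V\}\to u[a]$; $F(Q)$ denotes the set of all such induced dependencies. $Q=chase(Q)$ means: no atom occurs twice in the body, and for every relation $R$, every FD $V\to a$ on $R$ and every two body atoms $R(u),R(u')$, if $u[p]=u'[p]$ for all $p\in V$ then $u[a]=u'[a]$. Linear-program notation: for a variable list $u$, $h(u)$ means $h(S_u)$ where $S_u\subseteq[k]$ is the set of indices of variables occurring in $u$. For $A,B\subseteq[k]$, $h(A\mid B):=h(A\cup B)-h(B)$,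 and $I(i;j\mid S):=h(\{i\}\cup S)+h(\{j\}\cup S)-h(S)-h(\{i,j\}\cup S)$. (These constraints are the Shannon information inequalities with $h(S)$ playing the role of the joint entropy of $\{X_s: s\in S\}$.) *)

theory Defs
  imports Complex_Main
begin

text \<open>Query variables are natural numbers; var(Q) = {0..<k} (0-based X_1..X_k). Attribute positions are 0-based.
  An FD (R, V, a) on relation R states V \<rightarrow> a.\<close>

type_synonym 'r atom = "'r \<times> nat list"
type_synonym 'r fd = "'r \<times> nat set \<times> nat"

definition body_vars :: "'r atom list \<Rightarrow> nat set" where
  "body_vars body = (\<Union>(R,u)\<in>set body. set u)"

definition well_formed_query ::
  "('r \<Rightarrow> nat) \<Rightarrow> nat list \<Rightarrow> 'r atom list \<Rightarrow> bool" where
  "well_formed_query arity u0 body \<longleftrightarrow>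
     (\<forall>(R,u)\<in>set body. length u = arity R) \<and> set u0 \<subseteq> body_vars body"

definition well_formed_fds :: "('r \<Rightarrow> nat) \<Rightarrow> 'r fd set \<Rightarrow> bool" where
  "well_formed_fds arity fds \<longleftrightarrow> (\<forall>(R,V,a)\<in>fds. V \<subseteq> {..<arity R} \<and> a < arity R)"

definition is_chased :: "'r atom list \<Rightarrow> 'r fd set \<Rightarrow> bool" where
  "is_chased body fds \<longleftrightarrow> distinct body \<and>
     (\<forall>(R,V,a)\<in>fds. \<forall>u u'. (R,u) \<in> set body \<longrightarrow> (R,u') \<in> set body \<longrightarrow>
        (\<forall>p\<in>V. u!p = u'!p) \<longrightarrow> u!a = u'!a)"

definition induced_fds :: "'r atom list \<Rightarrow> 'r fd set \<Rightarrow> (nat set \<times> nat) set" where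
  "induced_fds body fds =
     {((\<lambda>p. u!p) ` V, u!a) | R V a u. (R,V,a) \<in> fds \<and> (R,u) \<in> set body}"

definition well_formed_db :: "('r \<Rightarrow> nat) \<Rightarrow> 'u set \<Rightarrow> ('r \<Rightarrow> 'u list set) \<Rightarrow> bool" where
  "well_formed_db arity U rel \<longleftrightarrow> finite U \<and>
     (\<forall>R. \<forall>t\<in>rel R. length t = arity R \<and> set t \<subseteq> U)"

definition satisfies_fds :: "('r \<Rightarrow> 'u list set) \<Rightarrow> 'r fd set \<Rightarrow> bool" where
  "satisfies_fds rel fds \<longleftrightarrow>
     (\<forall>(R,V,a)\<in>fds. \<forall>t\<in>rel R. \<forall>t'\<in>rel R. (\<forall>p\<in>V. t!p = t'!p) \<longrightarrow> t!a = t'!a)"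

definition answer :: "nat list \<Rightarrow> 'r atom list \<Rightarrow> 'u set \<Rightarrow> ('r \<Rightarrow> 'u list set) \<Rightarrow> 'u list set" where
  "answer u0 body U rel =
     {map \<theta> u0 | \<theta>. (\<forall>x\<in>body_vars body. \<theta> x \<in> U) \<and> (\<forall>(R,u)\<in>set body. map \<theta> u \<in> rel R)}"

definition rmax :: "'r atom list \<Rightarrow> ('r \<Rightarrow> 'u list set) \<Rightarrow> nat" where
  "rmax body rel = Max ((\<lambda>(R,u). card (rel R)) ` set body)"

definition cond_ent :: "(nat set \<Rightarrow> real) \<Rightarrow> nat set \<Rightarrow> nat set \<Rightarrow> real" where
  "cond_ent h A B = h (A \<union> B) - h B"

definition mutual_inf :: "(nat set \<Rightarrow> real) \<Rightarrow> nat \<Rightarrow> nat \<Rightarrow> nat set \<Rightarrow> real" where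
  "mutual_inf h i j S = h (insert i S) + h (insert j S) - h S - h ({i,j} \<union> S)"

text \<open>Feasible solutions of the linear program (only values on subsets of {0..<k} matter).\<close>
definition lp_feasible :: "nat \<Rightarrow> 'r atom list \<Rightarrow> 'r fd set \<Rightarrow> (nat set \<Rightarrow> real) \<Rightarrow> bool" where
  "lp_feasible k body fds h \<longleftrightarrow>
     h {} = 0 \<and>
     (\<forall>(R,u)\<in>set body. h (set u) \<le> 1) \<and>
     (\<forall>(A,t)\<in>induced_fds body fds. cond_ent h {t} A = 0) \<and>
     (\<forall>i<k. cond_ent h {i} ({..<k} - {i}) \<ge> 0) \<and>
     (\<forall>i<k. \<forall>j<k. \<forall>S. i \<noteq> j \<longrightarrow> S \<subseteq> {..<k} - {i,j} \<longrightarrow> mutual_inf h i j S \<ge> 0)"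

definition sQ :: "nat \<Rightarrow> nat list \<Rightarrow> 'r atom list \<Rightarrow> 'r fd set \<Rightarrow> real" where
  "sQ k u0 body fds = Sup {h (set u0) | h. lp_feasible k body fds h}"

end

theory Submission
  imports Defs
begin


definition ag :: "nat set \<Rightarrow> (nat \<Rightarrow> 'u) \<Rightarrow> (nat \<Rightarrow> 'u) \<Rightarrow> bool" where
  "ag P s t \<longleftrightarrow> (\<forall>x\<in>P. s x = t x)"

definition cc :: "(nat \<Rightarrow> 'u) set \<Rightarrow> nat set \<Rightarrow> (nat \<Rightarrow> 'u) \<Rightarrow> real" where
  "cc T P t = real (card {s\<in>T. ag P s t})"

lemma ag_sym: "ag P s t = ag P t s" by (auto simp: ag_def)

lemma cc_ge1: "finite T \<Longrightarrow> t \<in> T \<Longrightarrow> cc T P t \<ge> 1"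
proof -
  assume "finite T" "t \<in> T"
  then have "{s\<in>T. ag P s t} \<noteq> {}" by (auto simp: ag_def)
  with \<open>finite T\<close> have "card {s\<in>T. ag P s t} \<ge> 1"
    by (simp add: Suc_le_eq card_gt_0_iff)
  then show ?thesis by (simp add: cc_def)
qed

lemma card_filter_sum: "finite A \<Longrightarrow> real (card {x\<in>A. Q x}) = (\<Sum>x\<in>A. if Q x then 1 else 0)"
  by (simp add: sum.inter_filter[symmetric])

lemma inner_bound:
  assumes T: "finite T" and a: "a \<in> T" and b: "b \<in> T"
  shows "(\<Sum>t\<in>T. if ag P a t \<and> ag Q b t then 1 / (cc T (P\<inter>Q) t * cc T (P\<union>Q) t) else 0)
          \<le> (if ag (P\<inter>Q) a b then 1 / cc T (P\<inter>Q) a else 0)"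
proof -
  define W where "W = {t\<in>T. ag P a t \<and> ag Q b t}"
  have eq: "(\<Sum>t\<in>T. if ag P a t \<and> ag Q b t then 1 / (cc T (P\<inter>Q) t * cc T (P\<union>Q) t) else 0)
     = (\<Sum>t\<in>W. 1 / (cc T (P\<inter>Q) t * cc T (P\<union>Q) t))"
    unfolding W_def using T by (simp add: sum.inter_filter)
  show ?thesis
  proof (cases "W = {}")
    case True
    have "0 \<le> (if ag (P\<inter>Q) a b then 1 / cc T (P\<inter>Q) a else 0)"
      using cc_ge1[OF T a, of "P\<inter>Q"] by auto
    then show ?thesis using True eq by simp
  next
    case False
    then obtain t0 where t0: "t0 \<in> W" by blast
    have abq: "ag (P\<inter>Q) a b" using t0 unfolding W_def ag_def by auto
    have c1: "cc T (P\<inter>Q) t = cc T (P\<inter>Q) a" if "t \<in> W" for t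
    proof -
      have "{s\<in>T. ag (P\<inter>Q) s t} = {s\<in>T. ag (P\<inter>Q) s a}"
        using that unfolding W_def ag_def by auto
      then show ?thesis by (simp add: cc_def)
    qed
    have c2: "cc T (P\<union>Q) t = real (card W)" if "t \<in> W" for t
    proof -
      have "{s\<in>T. ag (P\<union>Q) s t} = W"
        using that unfolding W_def ag_def by auto
      then show ?thesis by (simp add: cc_def)
    qed
    have fW: "finite W" using T by (simp add: W_def)
    have cW: "card W > 0" using fW t0 card_gt_0_iff by blast
    have "(\<Sum>t\<in>W. 1 / (cc T (P\<inter>Q) t * cc T (P\<union>Q) t)) = (\<Sum>t\<in>W. 1 / (cc T (P\<inter>Q) a * real (card W)))"
      using c1 c2 by (intro sum.cong) auto
    also have "\<dots> = 1 / cc T (P\<inter>Q) a"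
      using cW by simp
    finally show ?thesis using eq abq by simp
  qed
qed

lemma core_sum:
  assumes T: "finite T"
  shows "(\<Sum>t\<in>T. cc T P t * cc T Q t / (cc T (P\<inter>Q) t * cc T (P\<union>Q) t)) \<le> real (card T)"
proof -
  let ?d = "\<lambda>t. 1 / (cc T (P\<inter>Q) t * cc T (P\<union>Q) t)"
  have e1: "cc T P t * cc T Q t / (cc T (P\<inter>Q) t * cc T (P\<union>Q) t)
     = (\<Sum>a\<in>T. \<Sum>b\<in>T. if ag P a t \<and> ag Q b t then ?d t else 0)" for t
  proof -
    have "cc T P t * cc T Q t = (\<Sum>a\<in>T. if ag P a t then 1 else 0) * (\<Sum>b\<in>T. if ag Q b t then 1 else 0)"
      unfolding cc_def using T by (simp add: card_filter_sum)
    also have "\<dots> = (\<Sum>a\<in>T. \<Sum>b\<in>T. (if ag P a t then 1 else 0) * (if ag Q b t then 1 else (0::real)))"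
      by (rule sum_product)
    finally have "cc T P t * cc T Q t / (cc T (P\<inter>Q) t * cc T (P\<union>Q) t) =
       (\<Sum>a\<in>T. \<Sum>b\<in>T. (if ag P a t then 1 else 0) * (if ag Q b t then 1 else (0::real))) * ?d t"
      by simp
    also have "\<dots> = (\<Sum>a\<in>T. \<Sum>b\<in>T. if ag P a t \<and> ag Q b t then ?d t else 0)"
      unfolding sum_distrib_right by (intro sum.cong refl) simp
    finally show ?thesis .
  qed
  have "(\<Sum>t\<in>T. cc T P t * cc T Q t / (cc T (P\<inter>Q) t * cc T (P\<union>Q) t))
     = (\<Sum>t\<in>T. \<Sum>a\<in>T. \<Sum>b\<in>T. if ag P a t \<and> ag Q b t then ?d t else 0)"
    by (rule sum.cong[OF refl], rule e1)
  also have "\<dots> = (\<Sum>a\<in>T. \<Sum>t\<in>T. \<Sum>b\<in>T. if ag P a t \<and> ag Q b t then ?d t else 0)"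
    by (rule sum.swap)
  also have "\<dots> = (\<Sum>a\<in>T. \<Sum>b\<in>T. \<Sum>t\<in>T. if ag P a t \<and> ag Q b t then ?d t else 0)"
    by (rule sum.cong[OF refl], rule sum.swap)
  also have "\<dots> \<le> (\<Sum>a\<in>T. \<Sum>b\<in>T. if ag (P\<inter>Q) a b then 1 / cc T (P\<inter>Q) a else 0)"
    by (intro sum_mono inner_bound[OF T])
  also have "\<dots> = (\<Sum>a\<in>T. 1)"
  proof (rule sum.cong[OF refl])
    fix a assume a: "a \<in> T"
    have "(\<Sum>b\<in>T. if ag (P\<inter>Q) a b then 1 / cc T (P\<inter>Q) a else 0) = (\<Sum>b\<in>{b\<in>T. ag (P\<inter>Q) b a}. 1 / cc T (P\<inter>Q) a)"
      using T by (simp only: sum.inter_filter ag_sym)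
    also have "\<dots> = cc T (P\<inter>Q) a * (1 / cc T (P\<inter>Q) a)" by (simp add: cc_def)
    also have "\<dots> = 1" using cc_ge1[OF T a, of "P\<inter>Q"] by simp
    finally show "(\<Sum>b\<in>T. if ag (P\<inter>Q) a b then 1 / cc T (P\<inter>Q) a else 0) = 1" .
  qed
  also have "\<dots> = real (card T)" by simp
  finally show ?thesis .
qed

definition Hn :: "(nat \<Rightarrow> 'u) set \<Rightarrow> nat set \<Rightarrow> real" where
  "Hn T S = (\<Sum>t\<in>T. ln (real (card T) / cc T S t))"

lemma Hn_submod:
  assumes T: "finite T"
  shows "Hn T (P\<inter>Q) + Hn T (P\<union>Q) \<le> Hn T P + Hn T Q"
proof -
  let ?r = "\<lambda>t. cc T P t * cc T Q t / (cc T (P\<inter>Q) t * cc T (P\<union>Q) t)"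
  have pos: "cc T S t > 0" if "t \<in> T" for S t using cc_ge1[OF T that, of S] by simp
  have n: "real (card T) > 0" if "t \<in> T" for t using T that card_gt_0_iff by fastforce
  have "Hn T P + Hn T Q - Hn T (P\<inter>Q) - Hn T (P\<union>Q) = (\<Sum>t\<in>T. - ln (?r t))"
    unfolding Hn_def sum_subtractf[symmetric] sum.distrib[symmetric]
  proof (rule sum.cong[OF refl])
    fix t assume t: "t \<in> T"
    note p = pos[OF t]
    show "ln (real (card T) / cc T P t) + ln (real (card T) / cc T Q t) - ln (real (card T) / cc T (P \<inter> Q) t) -
        ln (real (card T) / cc T (P \<union> Q) t) = - ln (?r t)"
      using p[of P] p[of Q] p[of "P\<inter>Q"] p[of "P\<union>Q"] n[OF t]
      by (simp add: ln_div ln_mult)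
  qed
  also have "\<dots> \<ge> (\<Sum>t\<in>T. 1 - ?r t)"
  proof (rule sum_mono)
    fix t assume t: "t \<in> T"
    have "?r t > 0" using pos[OF t] by simp
    then show "1 - ?r t \<le> - ln (?r t)" using ln_le_minus_one[of "?r t"] by simp
  qed
  also have "(\<Sum>t\<in>T. 1 - ?r t) = real (card T) - (\<Sum>t\<in>T. ?r t)"
    by (simp add: sum_subtractf)
  finally show ?thesis using core_sum[OF T, of P Q] by simp
qed

lemma Hn_mono:
  assumes T: "finite T" and "A \<subseteq> B"
  shows "Hn T A \<le> Hn T B"
  unfolding Hn_def
proof (rule sum_mono)
  fix t assume t: "t \<in> T"
  have n: "real (card T) > 0" using T t card_gt_0_iff by fastforce
  have "card {s\<in>T. ag B s t} \<le> card {s\<in>T. ag A s t}"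
    using assms by (intro card_mono) (auto simp: ag_def)
  then have "cc T B t \<le> cc T A t" by (simp add: cc_def)
  moreover have "cc T B t > 0" using cc_ge1[OF T t, of B] by simp
  ultimately show "ln (real (card T) / cc T A t) \<le> ln (real (card T) / cc T B t)"
    using n by (simp add: divide_left_mono)
qed

lemma Hn_empty: "finite T \<Longrightarrow> Hn T {} = 0"
  by (simp add: Hn_def cc_def ag_def)

lemma Hn_eqI:
  assumes "\<And>s t. s \<in> T \<Longrightarrow> t \<in> T \<Longrightarrow> ag A s t \<longleftrightarrow> ag B s t"
  shows "Hn T A = Hn T B"
proof -
  have "cc T A t = cc T B t" if "t \<in> T" for t
    unfolding cc_def using assms that by (metis (no_types, lifting) mem_Collect_eq)
  then show ?thesis unfolding Hn_def by simp
qed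

lemma Hn_le_card:
  assumes T: "finite T" and ne: "T \<noteq> {}"
    and g: "\<And>s t. s \<in> T \<Longrightarrow> t \<in> T \<Longrightarrow> ag S s t \<longleftrightarrow> g s = g t"
  shows "Hn T S \<le> real (card T) * ln (real (card (g ` T)))"
proof -
  define K where "K = real (card (g ` T))"
  define n where "n = real (card T)"
  have K: "K > 0" using T ne by (simp add: K_def card_gt_0_iff)
  have n: "n > 0" using T ne by (simp add: n_def card_gt_0_iff)
  have ccg: "cc T S t = real (card {s\<in>T. g s = g t})" if "t \<in> T" for t
    unfolding cc_def using g[OF _ that] by (metis (no_types, lifting) Collect_cong)
  have pos: "cc T S t > 0" if "t \<in> T" for t using cc_ge1[OF T that, of S] by simp
  have s1: "(\<Sum>t\<in>T. 1 / cc T S t) = K"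
  proof -
    have "(\<Sum>t\<in>T. 1 / cc T S t) = (\<Sum>y\<in>g ` T. \<Sum>t\<in>{x\<in>T. g x = y}. 1 / cc T S t)"
      using T by (rule sum.image_gen)
    also have "\<dots> = (\<Sum>y\<in>g ` T. 1)"
    proof (rule sum.cong[OF refl])
      fix y assume "y \<in> g ` T"
      then obtain t0 where t0: "t0 \<in> T" "y = g t0" by auto
      have "(\<Sum>t\<in>{x\<in>T. g x = y}. 1 / cc T S t) = (\<Sum>t\<in>{x\<in>T. g x = y}. 1 / real (card {x\<in>T. g x = y}))"
        using ccg by (intro sum.cong) auto
      also have "\<dots> = 1" using cc_ge1[OF T t0(1), of S] ccg[OF t0(1)] t0 by simp
      finally show "(\<Sum>t\<in>{x\<in>T. g x = y}. 1 / cc T S t) = 1" .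
    qed
    finally show ?thesis by (simp add: K_def)
  qed
  have "Hn T S = (\<Sum>t\<in>T. ln (n / (K * cc T S t)) + ln K)"
    unfolding Hn_def n_def[symmetric]
    using pos K n by (intro sum.cong) (auto simp: ln_div ln_mult dest: pos)
  also have "\<dots> \<le> (\<Sum>t\<in>T. (n / (K * cc T S t) - 1) + ln K)"
    using pos K n by (intro sum_mono add_right_mono ln_le_minus_one) auto
  also have "\<dots> = (n / K) * (\<Sum>t\<in>T. 1 / cc T S t) - n + n * ln K"
    by (simp add: sum.distrib sum_subtractf sum_distrib_left n_def)
  also have "\<dots> = n * ln K" using s1 K by simp
  finally show ?thesis by (simp add: n_def K_def)
qed



lemma lp_elem:
  assumes "lp_feasible k body fds h" "i < k" "j < k" "i \<noteq> j" "S \<subseteq> {..<k}" "i \<notin> S" "j \<notin> S"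
  shows "h (insert i (insert j S)) - h (insert j S) \<le> h (insert i S) - h S"
proof -
  have "mutual_inf h i j S \<ge> 0" using assms unfolding lp_feasible_def by blast
  moreover have "{i,j} \<union> S = insert i (insert j S)" by auto
  ultimately show ?thesis unfolding mutual_inf_def by simp
qed

lemma lp_dr:
  assumes F: "lp_feasible k body fds h" and AB: "A \<subseteq> B" and B: "B \<subseteq> {..<k}" and i: "i < k" "i \<notin> B"
  shows "h (insert i B) - h B \<le> h (insert i A) - h A"
proof -
  have "finite D \<Longrightarrow> A \<union> D \<subseteq> {..<k} \<Longrightarrow> i \<notin> A \<union> D \<Longrightarrow>
      h (insert i (A \<union> D)) - h (A \<union> D) \<le> h (insert i A) - h A" for D
  proof (induction D rule: finite_induct)
    case empty then show ?case by simp
  next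
    case (insert j D)
    show ?case
    proof (cases "j \<in> A")
      case True
      then have "A \<union> insert j D = A \<union> D" by auto
      then show ?thesis using insert by simp
    next
      case False
      let ?B = "A \<union> D"
      have j: "j < k" "j \<notin> ?B" using insert False by auto
      have "h (insert i (insert j ?B)) - h (insert j ?B) \<le> h (insert i ?B) - h ?B"
        using lp_elem[OF F i(1) j(1) _ _ _ j(2)] insert by auto
      moreover have "A \<union> insert j D = insert j ?B" by auto
      ultimately show ?thesis using insert by auto
    qed
  qed
  moreover have "A \<union> (B - A) = B" using AB by auto
  moreover have "finite (B - A)" using B finite_subset by blast
  ultimately show ?thesis using B i by (metis)
qed

lemma lp_mono1:
  assumes F: "lp_feasible k body fds h" and A: "A \<subseteq> {..<k}" and i: "i < k" "i \<notin> A"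
  shows "h A \<le> h (insert i A)"
proof -
  have "h (insert i ({..<k} - {i})) - h ({..<k} - {i}) \<le> h (insert i A) - h A"
    using lp_dr[OF F _ _ i(1), of A "{..<k} - {i}"] A i by blast
  moreover have "cond_ent h {i} ({..<k} - {i}) \<ge> 0" using F i unfolding lp_feasible_def by blast
  moreover have "{i} \<union> ({..<k} - {i}) = insert i ({..<k} - {i})" by auto
  ultimately show ?thesis unfolding cond_ent_def by simp
qed

lemma lp_mono:
  assumes F: "lp_feasible k body fds h" and AB: "A \<subseteq> B" and B: "B \<subseteq> {..<k}"
  shows "h A \<le> h B"
proof -
  have "finite D \<Longrightarrow> A \<union> D \<subseteq> {..<k} \<Longrightarrow> h A \<le> h (A \<union> D)" for D
  proof (induction D rule: finite_induct)
    case empty then show ?case by simp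
  next
    case (insert j D)
    show ?case
    proof (cases "j \<in> A \<union> D")
      case True
      then have "A \<union> insert j D = A \<union> D" by auto
      then show ?thesis using insert by simp
    next
      case False
      have "h (A \<union> D) \<le> h (insert j (A \<union> D))"
        using lp_mono1[OF F] insert False by auto
      moreover have "A \<union> insert j D = insert j (A \<union> D)" by auto
      ultimately show ?thesis using insert by auto
    qed
  qed
  moreover have "A \<union> (B - A) = B" using AB by auto
  moreover have "finite (B - A)" using B finite_subset by blast
  ultimately show ?thesis using B by metis
qed

lemma lp_subadd:
  assumes F: "lp_feasible k body fds h" and A: "A \<subseteq> {..<k}" and B: "B \<subseteq> {..<k}"
  shows "h (A \<union> B) \<le> h A + h B"
proof -
  have "finite B" using B finite_subset by blast
  then show ?thesis using B
  proof (induction B rule: finite_induct)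
    case empty
    then show ?case using F by (simp add: lp_feasible_def)
  next
    case (insert j B)
    show ?case
    proof (cases "j \<in> A \<union> B")
      case True
      then have "A \<union> insert j B = A \<union> B" by auto
      moreover have "h B \<le> h (insert j B)" using lp_mono[OF F, of B "insert j B"] insert by auto
      ultimately show ?thesis using insert by auto
    next
      case False
      have "h (insert j (A \<union> B)) - h (A \<union> B) \<le> h (insert j B) - h B"
        using lp_dr[OF F, of B "A \<union> B" j] insert False A by auto
      moreover have "A \<union> insert j B = insert j (A \<union> B)" by auto
      ultimately show ?thesis using insert by auto
    qed
  qed
qed

lemma lp_bvars:
  assumes F: "lp_feasible k body fds h" and bv: "body_vars body = {..<k}"
  shows "set bs \<subseteq> set body \<Longrightarrow> h (body_vars bs) \<le> real (length bs)"
proof (induction bs)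
  case Nil
  then show ?case using F by (simp add: lp_feasible_def body_vars_def)
next
  case (Cons a bs)
  obtain R u where a: "a = (R, u)" by fastforce
  have au: "(R,u) \<in> set body" using Cons a by auto
  have su: "set u \<subseteq> {..<k}" using au bv unfolding body_vars_def by auto
  have sb: "body_vars bs \<subseteq> {..<k}" using Cons bv unfolding body_vars_def by auto
  have "body_vars (a # bs) = set u \<union> body_vars bs" by (simp add: body_vars_def a)
  moreover have "h (set u) \<le> 1" using F au unfolding lp_feasible_def by fastforce
  moreover have "h (set u \<union> body_vars bs) \<le> h (set u) + h (body_vars bs)"
    using lp_subadd[OF F su sb] .
  ultimately show ?case using Cons by auto
qed

lemma lp_bound:
  assumes F: "lp_feasible k body fds h" and bv: "body_vars body = {..<k}"
    and wq: "well_formed_query arity u0 body"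
  shows "h (set u0) \<le> real (length body)"
proof -
  have "set u0 \<subseteq> {..<k}" using wq bv by (simp add: well_formed_query_def)
  then have "h (set u0) \<le> h (body_vars body)" using lp_mono[OF F] bv by simp
  also have "\<dots> \<le> real (length body)" using lp_bvars[OF F bv] by simp
  finally show ?thesis .
qed



theorem theorem1:
  fixes arity :: "'r \<Rightarrow> nat"
    and u0 :: "nat list" and body :: "'r atom list" and k :: nat
    and fds :: "'r fd set"
    and U :: "'u set" and rel :: "'r \<Rightarrow> 'u list set"
  assumes "well_formed_query arity u0 body"
    and "body_vars body = {..<k}"
    and "body \<noteq> []"
    and "well_formed_fds arity fds"
    and "is_chased body fds"
    and "well_formed_db arity U rel"
    and "\<forall>(R,u)\<in>set body. rel R \<noteq> {}"
    and "satisfies_fds rel fds"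
  shows "real (card (answer u0 body U rel)) \<le> real (rmax body rel) powr sQ k u0 body fds"
proof -
  note wq = assms(1) and bv = assms(2) and bne = assms(3) and wf = assms(4)
    and wd = assms(6) and rne = assms(7) and sat = assms(8)
  define A where "A = answer u0 body U rel"
  have fU: "finite U" using wd by (simp add: well_formed_db_def)
  have frel: "finite (rel R)" for R
  proof -
    have "rel R \<subseteq> {xs. set xs \<subseteq> U \<and> length xs = arity R}" using wd by (auto simp: well_formed_db_def)
    then show ?thesis using finite_lists_length_eq[OF fU] finite_subset by blast
  qed
  have u0bv: "set u0 \<subseteq> body_vars body" using wq by (simp add: well_formed_query_def)
  have fA: "finite A"
  proof -
    have "A \<subseteq> {xs. set xs \<subseteq> U \<and> length xs = length u0}"
      unfolding A_def answer_def using u0bv by (auto simp: subset_iff)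
    then show ?thesis using finite_lists_length_eq[OF fU] finite_subset by blast
  qed
  define M where "M = real (rmax body rel)"
  have fimg: "finite ((\<lambda>(R,u). card (rel R)) ` set body)" by simp
  have le_rmax: "card (rel R) \<le> rmax body rel" if "(R,u) \<in> set body" for R u
    unfolding rmax_def using that by (intro Max_ge[OF fimg]) force
  obtain R1 u1 where a1: "(R1,u1) \<in> set body" using bne by (cases body) auto
  have "card (rel R1) \<ge> 1" using rne a1 frel[of R1] by (auto simp: Suc_le_eq card_gt_0_iff)
  then have M1: "M \<ge> 1" using le_rmax[OF a1] by (simp add: M_def)
  show ?thesis
  proof (cases "A = {}")
    case True
    then show ?thesis by (simp add: A_def)
  next
    case Ane: False
    show ?thesis
    proof (cases "M = 1")
      case True
      have single: "card (rel R) \<le> 1" if "(R,u) \<in> set body" for R u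
        using le_rmax[OF that] True by (simp add: M_def)
      have "card A \<le> Suc 0"
        unfolding card_le_Suc0_iff_eq[OF fA]
      proof (intro ballI)
        fix a1 a2 assume "a1 \<in> A" "a2 \<in> A"
        then obtain t1 t2 where t1: "a1 = map t1 u0" "\<forall>(R,u)\<in>set body. map t1 u \<in> rel R"
          and t2: "a2 = map t2 u0" "\<forall>(R,u)\<in>set body. map t2 u \<in> rel R"
          unfolding A_def answer_def by blast
        have "t1 x = t2 x" if xb: "x \<in> body_vars body" for x
        proof -
          obtain R u where Ru: "(R,u) \<in> set body" "x \<in> set u" using xb unfolding body_vars_def by auto
          have "map t1 u \<in> rel R" "map t2 u \<in> rel R" using t1 t2 Ru by auto
          moreover have "card (rel R) \<le> Suc 0" using single[OF Ru(1)] by simp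
          ultimately have "map t1 u = map t2 u" using card_le_Suc0_iff_eq[OF frel] by blast
          then show ?thesis using Ru(2) by (simp add: map_eq_conv)
        qed
        then show "a1 = a2" using t1 t2 u0bv by (auto simp: map_eq_conv)
      qed
      then have "real (card A) \<le> 1" by simp
      then show ?thesis using True by (simp add: A_def M_def)
    next
      case False
      with M1 have M2: "M > 1" by simp
      define P where "P a \<theta> \<longleftrightarrow> a = map \<theta> u0 \<and> (\<forall>x\<in>body_vars body. \<theta> x \<in> U) \<and>
          (\<forall>(R,u)\<in>set body. map \<theta> u \<in> rel R)" for a and \<theta> :: "nat \<Rightarrow> 'u"
      define th where "th a = (SOME \<theta>. P a \<theta>)" for a
      have thP: "P a (th a)" if "a \<in> A" for a
      proof -
        have "\<exists>\<theta>. P a \<theta>" using that unfolding A_def answer_def P_def by blast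
        then show ?thesis unfolding th_def by (rule someI_ex)
      qed
      define T where "T = th ` A"
      have inj: "inj_on th A"
        by (rule inj_onI) (metis P_def thP)
      have cT: "card T = card A" unfolding T_def using card_image[OF inj] .
      have fT: "finite T" using fA T_def by simp
      have Tne: "T \<noteq> {}" using Ane T_def by simp
      have Trel: "map t u \<in> rel R" if "t \<in> T" "(R,u) \<in> set body" for t R u
        using that thP unfolding T_def P_def by fastforce
      define n where "n = real (card A)"
      have n0: "n > 0" using fA Ane by (simp add: n_def card_gt_0_iff)
      have lnM: "ln M > 0" using M2 by simp
      define h where "h S = Hn T S / (n * ln M)" for S
      have hmono: "h X \<le> h Y" if "X \<subseteq> Y" for X Y
        unfolding h_def using Hn_mono[OF fT that] n0 lnM by (simp add: divide_right_mono)
      have feas: "lp_feasible k body fds h"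
        unfolding lp_feasible_def
      proof (intro conjI)
        show "h {} = 0" unfolding h_def using Hn_empty[OF fT] by simp
        show "\<forall>(R,u)\<in>set body. h (set u) \<le> 1"
        proof (intro ballI, clarify)
          fix R u assume Ru: "(R,u) \<in> set body"
          have "Hn T (set u) \<le> real (card T) * ln (real (card ((\<lambda>t. map t u) ` T)))"
            by (rule Hn_le_card[OF fT Tne]) (simp add: ag_def map_eq_conv)
          also have "\<dots> \<le> n * ln M"
          proof -
            have "(\<lambda>t. map t u) ` T \<subseteq> rel R" using Trel Ru by auto
            then have "card ((\<lambda>t. map t u) ` T) \<le> card (rel R)" using frel by (rule card_mono[rotated])
            also have "\<dots> \<le> rmax body rel" using le_rmax[OF Ru] .
            finally have c: "real (card ((\<lambda>t. map t u) ` T)) \<le> M" by (simp add: M_def)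
            have "card ((\<lambda>t. map t u) ` T) > 0" using fT Tne by (simp add: card_gt_0_iff)
            then have "ln (real (card ((\<lambda>t. map t u) ` T))) \<le> ln M" using c by simp
            then show ?thesis using n0 cT by (simp add: n_def)
          qed
          finally show "h (set u) \<le> 1" unfolding h_def using n0 lnM by simp
        qed
        show "\<forall>(X,x)\<in>induced_fds body fds. cond_ent h {x} X = 0"
        proof (clarify)
          fix X x assume "(X,x) \<in> induced_fds body fds"
          then obtain R V a u where d: "X = (\<lambda>p. u!p) ` V" "x = u!a" "(R,V,a) \<in> fds" "(R,u) \<in> set body"
            unfolding induced_fds_def by blast
          have lu: "length u = arity R" using wq d(4) by (auto simp: well_formed_query_def)
          have Va: "V \<subseteq> {..<arity R}" "a < arity R" using wf d(3) by (auto simp: well_formed_fds_def)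
          have "Hn T ({x} \<union> X) = Hn T X"
          proof (rule Hn_eqI)
            fix s t assume st: "s \<in> T" "t \<in> T"
            have "ag X s t \<Longrightarrow> s x = t x"
            proof -
              assume ag: "ag X s t"
              have m: "map s u \<in> rel R" "map t u \<in> rel R" using Trel st d(4) by auto
              have "\<forall>p\<in>V. map s u ! p = map t u ! p"
                using ag Va lu unfolding d(1) ag_def by auto
              then have "map s u ! a = map t u ! a"
                using sat d(3) m unfolding satisfies_fds_def by blast
              then show "s x = t x" using Va lu d(2) by simp
            qed
            then show "ag ({x} \<union> X) s t = ag X s t" by (auto simp: ag_def)
          qed
          then show "cond_ent h {x} X = 0" by (simp add: cond_ent_def h_def)
        qed
        show "\<forall>i<k. 0 \<le> cond_ent h {i} ({..<k} - {i})"
          using hmono by (simp add: cond_ent_def subset_insertI2)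
        show "\<forall>i<k. \<forall>j<k. \<forall>S. i \<noteq> j \<longrightarrow> S \<subseteq> {..<k} - {i, j} \<longrightarrow> 0 \<le> mutual_inf h i j S"
        proof (intro allI impI)
          fix i j S assume "i < k" "j < k" "i \<noteq> j" "S \<subseteq> {..<k} - {i, j}"
          have e1: "insert i S \<inter> insert j S = S" using \<open>i \<noteq> j\<close> by auto
          have e2: "insert i S \<union> insert j S = {i,j} \<union> S" by auto
          have "Hn T S + Hn T ({i,j} \<union> S) \<le> Hn T (insert i S) + Hn T (insert j S)"
            using Hn_submod[OF fT, of "insert i S" "insert j S"] unfolding e1 e2 .
          then show "0 \<le> mutual_inf h i j S"
            unfolding mutual_inf_def h_def using n0 lnM
            by (simp add: add_divide_distrib[symmetric] diff_divide_distrib[symmetric] divide_nonneg_pos)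
        qed
      qed
      have hu0: "h (set u0) = ln n / ln M"
      proof -
        have "cc T (set u0) t = 1" if "t \<in> T" for t
        proof -
          have "s = t" if s: "s \<in> T" "ag (set u0) s t" for s
          proof -
            obtain a1 a2 where a: "a1 \<in> A" "a2 \<in> A" "s = th a1" "t = th a2"
              using s(1) \<open>t \<in> T\<close> unfolding T_def by blast
            have "map s u0 = map t u0" using s(2) unfolding ag_def by (simp add: map_eq_conv)
            moreover have "map (th a1) u0 = a1" "map (th a2) u0 = a2"
              using thP[OF a(1)] thP[OF a(2)] unfolding P_def by auto
            ultimately show ?thesis using a by simp
          qed
          then have "{s\<in>T. ag (set u0) s t} = {t}"
            using that by (auto simp: ag_def)
          then show ?thesis by (simp add: cc_def)
        qed
        then have "Hn T (set u0) = n * ln n"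
          unfolding Hn_def n_def cT[symmetric] by simp
        then show ?thesis unfolding h_def using n0 by simp
      qed
      have bdd: "bdd_above {h (set u0) | h. lp_feasible k body fds h}"
        unfolding bdd_above_def using lp_bound[OF _ bv wq] by blast
      have "ln n / ln M \<le> sQ k u0 body fds"
        unfolding sQ_def using feas hu0[symmetric] by (intro cSup_upper[OF _ bdd]) blast
      then have "M powr (ln n / ln M) \<le> M powr sQ k u0 body fds"
        using M1 by (intro powr_mono) auto
      moreover have "M powr (ln n / ln M) = n"
        using M2 n0 lnM by (simp add: powr_def)
      ultimately show ?thesis by (simp add: A_def n_def M_def)
    qed
  qed
qed


end
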